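(* At every moment during the execution of Greedy Dual on any MPMD or MBPMD instance, the following hold. (i) Every active set $S$ contains exactly $\mathrm{sur}(S)$ free (unmatched) requests. (ii) The family of all sets that are active or inactive at that moment is laminar.
   Context: Problem (MPMD / MBPMD). Let $(\mathcal{X},\mathrm{dist})$ be a metric space. An instance consists of $2m$ requests $u_1,\dots,u_{2m}$. Each request $u$ is a triple $(\mathrm{pos}(u),\mathrm{atime}(u),\mathrm{sgn}(u))$, where $\mathrm{pos}(u)\in\mathcal{X}$ is its location and $\mathrm{atime}(u)\ge0$ is its arrival time, with arrival times nondecreasing. In MPMD, $\mathrm{sgn}(u)=0$ for all requests. In MBPMD, exactly $m$ requests have sign $+1$ and $m$ have sign $-1$. At time $\tau$, an algorithm may match two arrived, unmatched requests $u,v$ with $\mathrm{sgn}(u)=-\mathrm{sgn}(v)$, at cost $\mathrm{dist}(\mathrm{pos}(u),\mathrm{pos}(v))$ (connection cost) plus $(\tau-\mathrm{atime}(u))+(\tau-\mathrm{atime}(v))$ (waiting costs). All requests must eventually be matched. Notation. Edges are unordered pairs $\{u,v\}$ of distinct requests with $\mathrm{sgn}(u)=-\mathrm{sgn}(v)$. For a set $S$ of requests, $\delta(S)$ is the set of edges with exactly one endpoint in $S$. In MPMD, $\mathrm{sur}(S)=|S|\bmod 2$; in MBPMD, $\mathrm{sur}(S)=|\sum_{u\in S}\mathrm{sgn}(u)|$. For an edge $e=(u,v)$, $\mathrm{cost}(e)=\mathrm{dist}(\mathrm{pos}(u),\mathrm{pos}(v))+|\mathrm{atime}(u)-\mathrm{atime}(v)|$.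 Algorithm Greedy Dual (GD). GD maintains a dual variable $y_S\ge0$ for every set $S$ of already-arrived requests; $y_S(\tau)$ denotes its value at time $\tau$. It also maintains a partition of the arrived requests into active sets, with $\mathcal{A}(u)$ denoting the active set containing $u$. An active set is growing if it contains at least one free request, and non-growing otherwise. - When a request $u$ arrives, $\mathcal{A}(u)\leftarrow\{u\}$ becomes a new active set, and $y_S\leftarrow 0$ for every new set $S$ containing $u$. - Tight-constraint event: while there is an edge $e=(u,v)$ between arrived requests with $\mathcal{A}(u)\neq\mathcal{A}(v)$ and $\sum_{S:\,e\in\delta(S)}y_S=\mathrm{cost}(e)$, GD does the following. It merges the two sets: $S=\mathcal{A}(u)\cup\mathcal{A}(v)$ becomes active and $\mathcal{A}(w)\leftarrow S$ for all $w\in S$, while $\mathcal{A}(u)$ and $\mathcal{A}(v)$ become inactive. It marks the edge $e$. Then, while there are free $u',v'\in S$ with $\mathrm{sgn}(u')=-\mathrm{sgn}(v')$, it matches $u'$ with $v'$ at the current time. - At all other times, $y_S$ increases continuously at rate $1$ (the same rate as time) for every active growing set $S$; all other dual variables stay constant. *)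

theory Defs
  imports Complex_Main
begin

text \<open>Requests are indexed by natural numbers 0,...,2m-1, in order of arrival.
  An instance is given by pos, atime, sg.\<close>

datatype variant = MPMD | MBPMD

definition valid_instance :: "variant \<Rightarrow> (nat \<Rightarrow> real) \<Rightarrow> (nat \<Rightarrow> int) \<Rightarrow> nat \<Rightarrow> bool" where
  "valid_instance var atime sg m \<longleftrightarrow>
     (\<forall>k<2*m. 0 \<le> atime k) \<and>
     (\<forall>i j. i \<le> j \<longrightarrow> j < 2*m \<longrightarrow> atime i \<le> atime j) \<and>
     (case var of
        MPMD \<Rightarrow> (\<forall>k<2*m. sg k = 0)
      | MBPMD \<Rightarrow> card {k. k < 2*m \<and> sg k = 1} = m \<and> card {k. k < 2*m \<and> sg k = -1} = m)"

definition sur :: "variant \<Rightarrow> (nat \<Rightarrow> int) \<Rightarrow> nat set \<Rightarrow> nat" where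
  "sur var sg S = (case var of MPMD \<Rightarrow> card S mod 2 | MBPMD \<Rightarrow> nat \<bar>\<Sum>u\<in>S. sg u\<bar>)"

definition laminar :: "'b set set \<Rightarrow> bool" where
  "laminar F \<longleftrightarrow> (\<forall>A\<in>F. \<forall>B\<in>F. A \<subseteq> B \<or> B \<subseteq> A \<or> A \<inter> B = {})"

definition is_edge :: "(nat \<Rightarrow> int) \<Rightarrow> nat \<Rightarrow> nat \<Rightarrow> bool" where
  "is_edge sg u v \<longleftrightarrow> u \<noteq> v \<and> sg u = - sg v"

definition cost :: "(nat \<Rightarrow> 'a::metric_space) \<Rightarrow> (nat \<Rightarrow> real) \<Rightarrow> nat \<Rightarrow> nat \<Rightarrow> real" where
  "cost pos atime u v = dist (pos u) (pos v) + \<bar>atime u - atime v\<bar>"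

text \<open>State of Greedy Dual. matching is the set of matched pairs {u,v};
  marked the set of marked edges; active/inactive the families of active/inactive sets;
  y the dual variables (only sets of arrived requests are relevant).\<close>
record gd_state =
  time :: real
  arrived :: "nat set"
  y :: "nat set \<Rightarrow> real"
  active :: "nat set set"
  inactive :: "nat set set"
  matching :: "nat set set"
  marked :: "nat set set"

definition gd_init :: gd_state where
  "gd_init = \<lparr>time = 0, arrived = {}, y = (\<lambda>_. 0), active = {}, inactive = {},
              matching = {}, marked = {}\<rparr>"

definition is_free :: "gd_state \<Rightarrow> nat \<Rightarrow> bool" where
  "is_free s w \<longleftrightarrow> w \<in> arrived s \<and> (\<forall>p\<in>matching s. w \<notin> p)"

definition growing :: "gd_state \<Rightarrow> nat set \<Rightarrow> bool" where
  "growing s S \<longleftrightarrow> (\<exists>w\<in>S. is_free s w)"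

definition load :: "gd_state \<Rightarrow> nat \<Rightarrow> nat \<Rightarrow> real" where
  "load s u v = sum (y s) {S. S \<subseteq> arrived s \<and> ((u \<in> S) \<noteq> (v \<in> S))}"

definition diff_active :: "gd_state \<Rightarrow> nat \<Rightarrow> nat \<Rightarrow> bool" where
  "diff_active s u v \<longleftrightarrow>
     (\<exists>Su\<in>active s. \<exists>Sv\<in>active s. u \<in> Su \<and> v \<in> Sv \<and> Su \<noteq> Sv)"

definition tight_exists :: "(nat \<Rightarrow> 'a::metric_space) \<Rightarrow> (nat \<Rightarrow> real) \<Rightarrow> (nat \<Rightarrow> int) \<Rightarrow> gd_state \<Rightarrow> bool" where
  "tight_exists pos atime sg s \<longleftrightarrow>
     (\<exists>u v. u \<in> arrived s \<and> v \<in> arrived s \<and> is_edge sg u v \<and> diff_active s u v \<and>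
            load s u v = cost pos atime u v)"

inductive match_step :: "(nat \<Rightarrow> int) \<Rightarrow> nat set \<Rightarrow> gd_state \<Rightarrow> gd_state \<Rightarrow> bool"
  for sg S where
  "u \<in> S \<Longrightarrow> v \<in> S \<Longrightarrow> is_edge sg u v \<Longrightarrow> is_free s u \<Longrightarrow> is_free s v \<Longrightarrow>
   match_step sg S s (s\<lparr>matching := insert {u, v} (matching s)\<rparr>)"

definition match_done :: "(nat \<Rightarrow> int) \<Rightarrow> nat set \<Rightarrow> gd_state \<Rightarrow> bool" where
  "match_done sg S s \<longleftrightarrow>
     \<not> (\<exists>u v. u \<in> S \<and> v \<in> S \<and> is_edge sg u v \<and> is_free s u \<and> is_free s v)"

text \<open>Atomic steps of Greedy Dual on an instance with n requests:
  arrival of the next request, a tight-constraint event (merge + matching loop),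
  and continuous growth of the duals over a time interval.\<close>
inductive gd_step :: "(nat \<Rightarrow> 'a::metric_space) \<Rightarrow> (nat \<Rightarrow> real) \<Rightarrow> (nat \<Rightarrow> int) \<Rightarrow> nat
                       \<Rightarrow> gd_state \<Rightarrow> gd_state \<Rightarrow> bool"
  for pos atime sg n where
  arrive:
  "arrived s = {..<k} \<Longrightarrow> k < n \<Longrightarrow> atime k = time s \<Longrightarrow>
   gd_step pos atime sg n s
     (s\<lparr>arrived := {..<Suc k}, y := (\<lambda>S. if k \<in> S then 0 else y s S),
        active := insert {k} (active s)\<rparr>)"
| tight:
  "u \<in> arrived s \<Longrightarrow> v \<in> arrived s \<Longrightarrow> is_edge sg u v \<Longrightarrow>
   Su \<in> active s \<Longrightarrow> Sv \<in> active s \<Longrightarrow> u \<in> Su \<Longrightarrow> v \<in> Sv \<Longrightarrow> Su \<noteq> Sv \<Longrightarrow>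
   load s u v = cost pos atime u v \<Longrightarrow>
   s1 = s\<lparr>active := insert (Su \<union> Sv) (active s - {Su, Sv}),
          inactive := inactive s \<union> {Su, Sv},
          marked := insert {u, v} (marked s)\<rparr> \<Longrightarrow>
   (match_step sg (Su \<union> Sv))\<^sup>*\<^sup>* s1 s2 \<Longrightarrow> match_done sg (Su \<union> Sv) s2 \<Longrightarrow>
   gd_step pos atime sg n s s2"
| grow:
  "t' > time s \<Longrightarrow> (\<forall>k<n. atime k < t' \<longrightarrow> k \<in> arrived s) \<Longrightarrow>
   \<not> tight_exists pos atime sg s \<Longrightarrow>
   s' = s\<lparr>time := t',
          y := (\<lambda>S. if S \<in> active s \<and> growing s S then y s S + (t' - time s) else y s S)\<rparr> \<Longrightarrow>
   (\<forall>u v. u \<in> arrived s \<longrightarrow> v \<in> arrived s \<longrightarrow> is_edge sg u v \<longrightarrow> diff_active s u v \<longrightarrow>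
          load s' u v \<le> cost pos atime u v) \<Longrightarrow>
   gd_step pos atime sg n s s'"

end

theory Submission
  imports Defs
begin

definition NF where "NF s S = {w\<in>S. \<not> is_free s w}"
definition nofree where
  "nofree sg s S \<longleftrightarrow> (\<forall>u\<in>S. \<forall>v\<in>S. is_free s u \<longrightarrow> is_free s v \<longrightarrow> \<not> is_edge sg u v)"
definition inv0 where
  "inv0 sg n s \<longleftrightarrow> arrived s \<subseteq> {..<n} \<and> (\<forall>p\<in>matching s. p \<subseteq> arrived s)
    \<and> (\<forall>S\<in>active s. S \<subseteq> arrived s)
    \<and> (\<forall>S\<in>active s. \<forall>T\<in>active s. S \<noteq> T \<longrightarrow> S \<inter> T = {})
    \<and> (\<forall>F\<in>inactive s. \<exists>T\<in>active s. F \<subseteq> T)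
    \<and> laminar (active s \<union> inactive s)
    \<and> (\<forall>S\<in>active s. even (card (NF s S)) \<and> sum sg (NF s S) = 0)"
definition inv where "inv sg n s \<longleftrightarrow> inv0 sg n s \<and> (\<forall>S\<in>active s. nofree sg s S)"

lemma match_one:
  assumes I: "inv0 sg n s" and SA: "S \<in> active s" and M: "match_step sg S s s'"
  shows "inv0 sg n s' \<and> active s' = active s \<and> inactive s' = inactive s \<and> arrived s' = arrived s
         \<and> (\<forall>w. is_free s' w \<longrightarrow> is_free s w)"
proof -
  from M obtain u v where uv: "u\<in>S" "v\<in>S" "is_edge sg u v" "is_free s u" "is_free s v"
    and s': "s' = s\<lparr>matching := insert {u,v} (matching s)\<rparr>" by (cases) auto
  have fr: "\<And>w. is_free s' w \<longleftrightarrow> is_free s w \<and> w \<noteq> u \<and> w \<noteq> v" using s' by (auto simp: is_free_def)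
  have uvne: "u \<noteq> v" using uv(3) by (simp add: is_edge_def)
  have sgs: "sg u + sg v = 0" using uv(3) by (simp add: is_edge_def)
  have Sarr: "S \<subseteq> arrived s" using I SA by (auto simp: inv0_def)
  have fin: "finite (arrived s)" using I finite_subset[of "arrived s" "{..<n}"] by (auto simp: inv0_def)
  have NFT: "even (card (NF s' T)) \<and> sum sg (NF s' T) = 0" if T: "T \<in> active s" for T
  proof (cases "T = S")
    case True
    have e: "NF s' T = insert u (insert v (NF s T))" using True uv fr by (auto simp: NF_def)
    have nu: "u \<notin> NF s T" "v \<notin> NF s T" using uv by (auto simp: NF_def)
    have finT: "finite (NF s T)" using True Sarr fin by (auto simp: NF_def intro: finite_subset)
    have "card (NF s' T) = card (NF s T) + 2" using e nu finT uvne by simp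
    moreover have "sum sg (NF s' T) = sum sg (NF s T) + (sg u + sg v)" using e nu finT uvne by simp
    ultimately show ?thesis using I T sgs by (auto simp: inv0_def)
  next
    case False
    then have "T \<inter> S = {}" using I SA T by (auto simp: inv0_def)
    then have "NF s' T = NF s T" using uv fr by (auto simp: NF_def)
    then show ?thesis using I T by (auto simp: inv0_def)
  qed
  have "{u,v} \<subseteq> arrived s" using uv by (auto simp: is_free_def)
  then show ?thesis using I NFT fr by (auto simp: inv0_def s')
qed

lemma match_star:
  assumes "(match_step sg S)\<^sup>*\<^sup>* s1 s2" "inv0 sg n s1" "S \<in> active s1"
  shows "inv0 sg n s2 \<and> active s2 = active s1 \<and> inactive s2 = inactive s1 \<and> arrived s2 = arrived s1
         \<and> (\<forall>w. is_free s2 w \<longrightarrow> is_free s1 w)"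
  using assms
proof (induction rule: rtranclp_induct)
  case base then show ?case by simp
next
  case (step b c)
  then have "inv0 sg n b \<and> active b = active s1 \<and> inactive b = inactive s1 \<and> arrived b = arrived s1
         \<and> (\<forall>w. is_free b w \<longrightarrow> is_free s1 w)" by blast
  moreover have "inv0 sg n c \<and> active c = active b \<and> inactive c = inactive b \<and> arrived c = arrived b
         \<and> (\<forall>w. is_free c w \<longrightarrow> is_free b w)"
    using match_one[of sg n b S c] calculation step by auto
  ultimately show ?case by auto
qed

lemma laminar_insert:
  assumes "laminar F" "\<forall>A\<in>F. A \<subseteq> S \<or> A \<inter> S = {}"
  shows "laminar (insert S F)"
  using assms unfolding laminar_def by blast

lemma arrive_inv:
  assumes I: "inv sg n s" and A: "arrived s = {..<k}" "k < n"
    and s': "s' = s\<lparr>arrived := {..<Suc k}, y := Y, active := insert {k} (active s)\<rparr>"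
  shows "inv sg n s'"
proof -
  have I0: "inv0 sg n s" using I by (simp add: inv_def)
  have pm: "\<forall>p\<in>matching s. p \<subseteq> {..<k}" using I0 A by (simp add: inv0_def)
  have fr: "\<And>w. is_free s' w \<longleftrightarrow> (w < k \<and> is_free s w) \<or> w = k"
    using pm A by (auto simp: is_free_def s')
  have NFeq: "NF s' T = NF s T" if "T \<subseteq> {..<k}" for T using that fr by (auto simp: NF_def)
  have NFk: "NF s' {k} = {}" using fr by (auto simp: NF_def)
  have nofreq: "nofree sg s' T = nofree sg s T" if "T \<subseteq> {..<k}" for T
  proof -
    have "\<forall>w\<in>T. is_free s' w = is_free s w" using that fr by auto
    then show ?thesis unfolding nofree_def by auto
  qed
  have actsub: "\<forall>S\<in>active s. S \<subseteq> {..<k}" using I0 A by (simp add: inv0_def)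
  have inin: "\<forall>F\<in>inactive s. \<exists>T\<in>active s. F \<subseteq> T" using I0 by (simp add: inv0_def)
  have famsub: "\<forall>F\<in>active s \<union> inactive s. F \<subseteq> {..<k}" using inin actsub by blast
  have lam0: "laminar (active s \<union> inactive s)" using I0 by (simp add: inv0_def)
  have "\<forall>A\<in>active s \<union> inactive s. A \<subseteq> {k} \<or> A \<inter> {k} = {}" using famsub by auto
  then have lam: "laminar (insert {k} (active s \<union> inactive s))"
    using laminar_insert lam0 by blast
  have "inv0 sg n s'"
    unfolding inv0_def
  proof (intro conjI)
    show "arrived s' \<subseteq> {..<n}" using A by (auto simp: s')
    show "\<forall>p\<in>matching s'. p \<subseteq> arrived s'" using pm by (fastforce simp: s')
    show "\<forall>S\<in>active s'. S \<subseteq> arrived s'" using actsub by (fastforce simp: s')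
    show "\<forall>S\<in>active s'. \<forall>T\<in>active s'. S \<noteq> T \<longrightarrow> S \<inter> T = {}"
    proof -
      have d: "\<forall>S\<in>active s. \<forall>T\<in>active s. S \<noteq> T \<longrightarrow> S \<inter> T = {}" using I0 by (simp add: inv0_def)
      have "\<forall>S\<in>active s. S \<inter> {k} = {} \<and> {k} \<inter> S = {}" using actsub by auto
      then show ?thesis using d unfolding s' by simp
    qed
    show "\<forall>F\<in>inactive s'. \<exists>T\<in>active s'. F \<subseteq> T" using I0 by (auto simp: s' inv0_def)
    show "laminar (active s' \<union> inactive s')" using lam by (simp add: s')
    show "\<forall>S\<in>active s'. even (card (NF s' S)) \<and> sum sg (NF s' S) = 0"
      using I0 actsub NFeq NFk by (auto simp: s' inv0_def)
  qed
  moreover have "\<forall>S\<in>active s'. nofree sg s' S"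
  proof
    fix S assume "S \<in> active s'"
    then have "S = {k} \<or> S \<in> active s" by (simp add: s')
    then show "nofree sg s' S"
    proof
      assume "S = {k}" then show ?thesis by (simp add: nofree_def is_edge_def)
    next
      assume "S \<in> active s" then show ?thesis using nofreq actsub I by (auto simp: inv_def)
    qed
  qed
  ultimately show ?thesis by (simp add: inv_def)
qed

lemma tight_inv:
  assumes I: "inv sg n s" and SA: "Su \<in> active s" "Sv \<in> active s" "Su \<noteq> Sv"
    and s1: "s1 = s\<lparr>active := insert (Su \<union> Sv) (active s - {Su, Sv}),
          inactive := inactive s \<union> {Su, Sv}, marked := Mk\<rparr>"
    and R: "(match_step sg (Su \<union> Sv))\<^sup>*\<^sup>* s1 s2" and D: "match_done sg (Su \<union> Sv) s2"
  shows "inv sg n s2"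
proof -
  define S where "S = Su \<union> Sv"
  have I0: "inv0 sg n s" using I by (simp add: inv_def)
  have fr1: "\<And>w. is_free s1 w = is_free s w" by (simp add: is_free_def s1)
  have NF1: "\<And>T. NF s1 T = NF s T" using fr1 by (simp add: NF_def)
  have d: "\<forall>S\<in>active s. \<forall>T\<in>active s. S \<noteq> T \<longrightarrow> S \<inter> T = {}" using I0 by (simp add: inv0_def)
  have actsub: "\<forall>S\<in>active s. S \<subseteq> arrived s" using I0 by (simp add: inv0_def)
  have inin: "\<forall>F\<in>inactive s. \<exists>T\<in>active s. F \<subseteq> T" using I0 by (simp add: inv0_def)
  have lam0: "laminar (active s \<union> inactive s)" using I0 by (simp add: inv0_def)
  have disj: "Su \<inter> Sv = {}" using d SA by blast
  have Xdisj: "X \<inter> S = {}" if "X \<in> active s" "X \<noteq> Su" "X \<noteq> Sv" for X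
    using d SA that unfolding S_def by blast
  have fin: "finite (arrived s)" using I0 finite_subset[of "arrived s" "{..<n}"] by (auto simp: inv0_def)
  have Ssub: "S \<subseteq> arrived s" using actsub SA unfolding S_def by blast
  have fam: "active s1 \<union> inactive s1 = insert S (active s \<union> inactive s)"
    using SA unfolding s1 S_def by auto
  have famrel: "\<forall>A\<in>active s \<union> inactive s. A \<subseteq> S \<or> A \<inter> S = {}"
  proof
    fix A assume "A \<in> active s \<union> inactive s"
    then obtain T where T: "T \<in> active s" "A \<subseteq> T" using inin by blast
    show "A \<subseteq> S \<or> A \<inter> S = {}"
    proof (cases "T = Su \<or> T = Sv")
      case True then show ?thesis using T unfolding S_def by blast
    next
      case False then have "T \<inter> S = {}" using Xdisj T by blast
      then show ?thesis using T by blast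
    qed
  qed
  have NFS: "even (card (NF s S)) \<and> sum sg (NF s S) = 0"
  proof -
    have e: "NF s S = NF s Su \<union> NF s Sv" unfolding S_def NF_def by blast
    have de: "NF s Su \<inter> NF s Sv = {}" using disj unfolding NF_def by blast
    have f1: "finite (NF s Su)" "finite (NF s Sv)"
      using Ssub fin unfolding S_def NF_def by (auto intro: finite_subset)
    have c: "card (NF s S) = card (NF s Su) + card (NF s Sv)" using e de f1 card_Un_disjoint by metis
    have sm: "sum sg (NF s S) = sum sg (NF s Su) + sum sg (NF s Sv)" using e de f1 sum.union_disjoint by metis
    have "even (card (NF s Su)) \<and> sum sg (NF s Su) = 0" "even (card (NF s Sv)) \<and> sum sg (NF s Sv) = 0"
      using I0 SA by (auto simp: inv0_def)
    then show ?thesis using c sm by simp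
  qed
  have "inv0 sg n s1"
    unfolding inv0_def
  proof (intro conjI)
    show "arrived s1 \<subseteq> {..<n}" using I0 by (simp add: s1 inv0_def)
    show "\<forall>p\<in>matching s1. p \<subseteq> arrived s1" using I0 by (simp add: s1 inv0_def)
    show "\<forall>X\<in>active s1. X \<subseteq> arrived s1" using actsub Ssub unfolding s1 S_def by simp
    show "\<forall>X\<in>active s1. \<forall>T\<in>active s1. X \<noteq> T \<longrightarrow> X \<inter> T = {}"
    proof (intro ballI impI)
      fix X T assume X: "X \<in> active s1" and T: "T \<in> active s1" and ne: "X \<noteq> T"
      have X': "X = S \<or> (X \<in> active s \<and> X \<noteq> Su \<and> X \<noteq> Sv)" using X unfolding s1 S_def by simp
      have T': "T = S \<or> (T \<in> active s \<and> T \<noteq> Su \<and> T \<noteq> Sv)" using T unfolding s1 S_def by simp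
      show "X \<inter> T = {}"
      proof (cases "X = S")
        case True then have "T \<in> active s \<and> T \<noteq> Su \<and> T \<noteq> Sv" using T' ne by simp
        then have "T \<inter> S = {}" using Xdisj by blast
        then show ?thesis using True by blast
      next
        case False
        then have XX: "X \<in> active s \<and> X \<noteq> Su \<and> X \<noteq> Sv" using X' by simp
        show ?thesis
        proof (cases "T = S")
          case True then show ?thesis using XX Xdisj by simp
        next
          case False then have "T \<in> active s" using T' by simp
          then show ?thesis using XX d ne by simp
        qed
      qed
    qed
    show "\<forall>F\<in>inactive s1. \<exists>T\<in>active s1. F \<subseteq> T"
    proof
      fix F assume "F \<in> inactive s1"
      then have "F \<in> inactive s \<or> F = Su \<or> F = Sv" by (auto simp: s1)
      then have "\<exists>T\<in>active s. F \<subseteq> T" using inin SA by blast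
      then obtain T where T: "T \<in> active s" "F \<subseteq> T" by blast
      have "S \<in> active s1" by (simp add: s1 S_def)
      show "\<exists>T\<in>active s1. F \<subseteq> T"
      proof (cases "T = Su \<or> T = Sv")
        case True then show ?thesis using T \<open>S \<in> active s1\<close> unfolding S_def by blast
      next
        case False then have "T \<in> active s1" using T by (simp add: s1)
        then show ?thesis using T by blast
      qed
    qed
    show "laminar (active s1 \<union> inactive s1)" unfolding fam by (rule laminar_insert[OF lam0 famrel])
    show "\<forall>X\<in>active s1. even (card (NF s1 X)) \<and> sum sg (NF s1 X) = 0"
    proof
      fix X assume X: "X \<in> active s1"
      have "X = S \<or> X \<in> active s" using X unfolding s1 S_def by auto
      moreover have "\<forall>X\<in>active s. even (card (NF s X)) \<and> sum sg (NF s X) = 0"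
        using I0 by (simp add: inv0_def)
      ultimately show "even (card (NF s1 X)) \<and> sum sg (NF s1 X) = 0"
        using NFS unfolding NF1 by blast
    qed
  qed
  moreover have "S \<in> active s1" by (simp add: s1 S_def)
  ultimately have M: "inv0 sg n s2 \<and> active s2 = active s1 \<and> (\<forall>w. is_free s2 w \<longrightarrow> is_free s1 w)"
    using match_star[of sg S s1 s2 n] R unfolding S_def by blast
  have "\<forall>X\<in>active s2. nofree sg s2 X"
  proof
    fix X assume X: "X \<in> active s2"
    show "nofree sg s2 X"
    proof (cases "X = S")
      case True then show ?thesis using D unfolding match_done_def nofree_def S_def by blast
    next
      case False
      then have "X \<in> active s" using X M unfolding s1 S_def by auto
      then have "nofree sg s X" using I by (simp add: inv_def)
      then show ?thesis using M fr1 unfolding nofree_def by blast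
    qed
  qed
  then show ?thesis using M by (simp add: inv_def)
qed

lemma step_inv:
  assumes "gd_step pos atime sg n s s'" "inv sg n s"
  shows "inv sg n s'"
  using assms(1)
proof cases
  case (arrive k)
  then show ?thesis using arrive_inv[OF assms(2)] by blast
next
  case (tight u v Su Sv s1)
  then show ?thesis using tight_inv[OF assms(2), where Mk = "insert {u, v} (marked s)"] by blast
next
  case (grow t')
  have fr: "is_free s' = is_free s" using grow by (auto simp: is_free_def fun_eq_iff)
  have NF: "NF s' = NF s" using fr by (simp add: NF_def fun_eq_iff)
  have nf: "nofree sg s' = nofree sg s" using fr by (simp add: nofree_def fun_eq_iff)
  have same: "arrived s' = arrived s" "matching s' = matching s" "active s' = active s"
    "inactive s' = inactive s" using grow by auto
  show ?thesis using assms(2) unfolding inv_def inv0_def same NF nf .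
qed

lemma init_inv: "inv sg n gd_init"
  by (simp add: inv_def inv0_def gd_init_def laminar_def)

lemma reach_inv:
  assumes "(gd_step pos atime sg n)\<^sup>*\<^sup>* gd_init s"
  shows "inv sg n s"
  using assms
proof (induction rule: rtranclp_induct)
  case base then show ?case by (rule init_inv)
next
  case (step b c) then show ?case using step_inv by blast
qed

lemma final:
  assumes V: "valid_instance var atime sg m" and I: "inv sg (2*m) s" and SA: "S \<in> active s"
  shows "card {w \<in> S. is_free s w} = sur var sg S"
proof -
  have I0: "inv0 sg (2*m) s" using I by (simp add: inv_def)
  have Ssub: "S \<subseteq> {..<2*m}" using I0 SA by (auto simp: inv0_def)
  have finS: "finite S" using Ssub finite_subset by blast
  define Fr where "Fr = {w \<in> S. is_free s w}"
  have finF: "finite Fr" "finite (NF s S)" using finS by (auto simp: Fr_def NF_def)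
  have un: "S = Fr \<union> NF s S" "Fr \<inter> NF s S = {}" by (auto simp: Fr_def NF_def)
  have cS: "card S = card Fr + card (NF s S)" using un finF card_Un_disjoint by metis
  have sS: "sum sg S = sum sg Fr + sum sg (NF s S)" using un finF sum.union_disjoint by metis
  have ev: "even (card (NF s S))" "sum sg (NF s S) = 0" using I0 SA by (auto simp: inv0_def)
  have nof: "\<And>u v. u \<in> Fr \<Longrightarrow> v \<in> Fr \<Longrightarrow> \<not> is_edge sg u v"
    using I SA unfolding inv_def nofree_def Fr_def by blast
  show ?thesis
  proof (cases var)
    case MPMD
    then have z: "\<forall>k<2*m. sg k = 0" using V by (simp add: valid_instance_def)
    have "\<forall>a\<in>Fr. \<forall>b\<in>Fr. a = b"
    proof (intro ballI)
      fix a b assume ab: "a \<in> Fr" "b \<in> Fr"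
      then have "sg a = 0" "sg b = 0" using z Ssub by (auto simp: Fr_def)
      then show "a = b" using nof[OF ab] by (auto simp: is_edge_def)
    qed
    then have "card Fr \<le> 1" using card_le_Suc0_iff_eq[OF finF(1)] by simp
    moreover obtain q where "card (NF s S) = 2 * q" using ev(1) by (auto elim!: evenE)
    ultimately have "card S mod 2 = card Fr" using cS by (cases "card Fr") auto
    then show ?thesis using MPMD by (simp add: sur_def Fr_def)
  next
    case MBPMD
    then have cards: "card {k. k < 2*m \<and> sg k = 1} = m" "card {k. k < 2*m \<and> sg k = -1} = m"
      using V by (auto simp: valid_instance_def)
    have pm: "\<forall>k<2*m. sg k = 1 \<or> sg k = -1"
    proof -
      let ?A = "{k. k < 2*m \<and> sg k = 1}" and ?B = "{k. k < 2*m \<and> sg k = -1}"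
      have "?A \<inter> ?B = {}" by auto
      moreover have "finite ?A" "finite ?B" by auto
      ultimately have "card (?A \<union> ?B) = card ?A + card ?B" by (simp add: card_Un_disjoint)
      then have "card (?A \<union> ?B) = 2*m" using cards by simp
      moreover have "?A \<union> ?B \<subseteq> {..<2*m}" by auto
      ultimately have "?A \<union> ?B = {..<2*m}" using card_subset_eq[of "{..<2*m}" "?A \<union> ?B"] by simp
      then show ?thesis by blast
    qed
    have sF: "sum sg S = sum sg Fr" using sS ev by simp
    have "nat \<bar>sum sg Fr\<bar> = card Fr"
    proof (cases "Fr = {}")
      case True then show ?thesis by simp
    next
      case False
      then obtain u0 where u0: "u0 \<in> Fr" by blast
      have same: "\<forall>w\<in>Fr. sg w = sg u0"
      proof
        fix w assume w: "w \<in> Fr"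
        show "sg w = sg u0"
        proof (cases "w = u0")
          case True then show ?thesis by simp
        next
          case False
          then have "sg w \<noteq> - sg u0" using nof[OF w u0] by (simp add: is_edge_def)
          moreover have "sg w = 1 \<or> sg w = -1" "sg u0 = 1 \<or> sg u0 = -1"
            using pm Ssub w u0 by (auto simp: Fr_def)
          ultimately show ?thesis by auto
        qed
      qed
      then have "sum sg Fr = of_nat (card Fr) * sg u0" by simp
      moreover have "\<bar>sg u0\<bar> = 1" using pm Ssub u0 by (auto simp: Fr_def)
      ultimately show ?thesis by (simp add: abs_mult)
    qed
    then show ?thesis using MBPMD sF by (simp add: sur_def Fr_def)
  qed
qed

theorem mainTheorem2:
  fixes pos :: "nat \<Rightarrow> 'a::metric_space" and atime :: "nat \<Rightarrow> real" and sg :: "nat \<Rightarrow> int"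
    and m :: nat and var :: variant and s :: gd_state
  assumes "valid_instance var atime sg m"
    and "(gd_step pos atime sg (2 * m))\<^sup>*\<^sup>* gd_init s"
  shows "(\<forall>S\<in>active s. card {w \<in> S. is_free s w} = sur var sg S)
         \<and> laminar (active s \<union> inactive s)"
proof -
  have I: "inv sg (2*m) s" using reach_inv[OF assms(2)] .
  then have "laminar (active s \<union> inactive s)" by (simp add: inv_def inv0_def)
  then show ?thesis using final[OF assms(1) I] by blast
qed

end
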